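(* Let $\mathscr C$ be a universally separable concept class on a measurable space $\Omega$ and $d\in\mathbb N$. The following are equivalent: (1) $\mathrm{VC}(\mathscr C\,\mathrm{mod}\,\omega_1)\le d$; (2) there is a countable set $N\subseteq\Omega$ such that $\mathrm{VC}(\mathscr C\restriction(\Omega\setminus N))\le d$.
   Context: $\mathscr C$ is universally separable if there is a countable $\mathscr C'\subseteq\mathscr C$ such that every $C\in\mathscr C$ is the pointwise limit of indicator functions of a sequence from $\mathscr C'$. $\mathrm{VC}(\mathscr C\restriction X)$ is the VC dimension of $\{C\cap X:C\in\mathscr C\}$. $\mathrm{VC}(\mathscr C\,\mathrm{mod}\,\omega_1)$ is the supremum of $n$ for which there exist uncountable sets $A_1,\dots,A_n\subseteq\Omega$ such that for every $J\subseteq\{1,\dots,n\}$ some $C\in\mathscr C$ contains $A_i$ for all $i\in J$ and is disjoint from $A_j$ for all $j\notin J$. *)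

theory Defs
  imports "HOL-Analysis.Analysis" "HOL-Library.Extended_Nat"
begin

definition universally_separable :: "'a set \<Rightarrow> 'a set set \<Rightarrow> bool" where
  "universally_separable \<Omega> \<C> \<longleftrightarrow>
     (\<exists>\<C>'. countable \<C>' \<and> \<C>' \<subseteq> \<C> \<and>
        (\<forall>c\<in>\<C>. \<exists>f :: nat \<Rightarrow> 'a set. range f \<subseteq> \<C>' \<and>
           (\<forall>x\<in>\<Omega>. (\<lambda>n. indicator (f n) x :: real) \<longlonglongrightarrow> indicator c x)))"

definition shatters :: "'a set set \<Rightarrow> 'a set \<Rightarrow> bool" where
  "shatters H F \<longleftrightarrow> (\<forall>Y. Y \<subseteq> F \<longrightarrow> (\<exists>h\<in>H. h \<inter> F = Y))"

definition vc_dim :: "'a set set \<Rightarrow> enat" where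
  "vc_dim H = Sup {enat (card F) | F. finite F \<and> shatters H F}"

definition restrict_class :: "'a set set \<Rightarrow> 'a set \<Rightarrow> 'a set set" where
  "restrict_class \<C> X = (\<lambda>c. c \<inter> X) ` \<C>"

definition vc_mod_omega1 :: "'a set \<Rightarrow> 'a set set \<Rightarrow> enat" where
  "vc_mod_omega1 \<Omega> \<C> = Sup {enat n | n. \<exists>A :: nat \<Rightarrow> 'a set.
      (\<forall>i\<in>{1..n}. A i \<subseteq> \<Omega> \<and> uncountable (A i)) \<and>
      (\<forall>J \<subseteq> {1..n}. \<exists>c\<in>\<C>. (\<forall>i\<in>J. A i \<subseteq> c) \<and> (\<forall>j\<in>{1..n} - J. c \<inter> A j = {}))}"

end

theory Submission
  imports Defs
begin

lemma approx_finite: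
  assumes conv: "\<forall>x\<in>\<Omega>. (\<lambda>n. indicator (f n) x :: real) \<longlonglongrightarrow> indicator c x"
    and G: "finite G" "G \<subseteq> \<Omega>"
  shows "\<exists>k. f k \<inter> G = c \<inter> G"
proof -
  have "\<forall>x\<in>G. eventually (\<lambda>k. (x \<in> f k) = (x \<in> c)) sequentially"
  proof
    fix x assume "x \<in> G"
    with G conv have t: "(\<lambda>n. indicator (f n) x :: real) \<longlonglongrightarrow> indicator c x" by auto
    have "eventually (\<lambda>k. dist (indicator (f k) x :: real) (indicator c x) < 1/2) sequentially"
      using tendstoD[OF t, of "1/2"] by simp
    then show "eventually (\<lambda>k. (x \<in> f k) = (x \<in> c)) sequentially"
    proof (rule eventually_mono)
      fix k assume d: "dist (indicator (f k) x :: real) (indicator c x) < 1/2"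
      show "(x \<in> f k) = (x \<in> c)"
      proof (cases "x \<in> c"; cases "x \<in> f k")
      qed (use d in \<open>auto simp: dist_real_def\<close>)
    qed
  qed
  then have "eventually (\<lambda>k. \<forall>x\<in>G. (x \<in> f k) = (x \<in> c)) sequentially"
    using G(1) by (simp add: eventually_ball_finite)
  then obtain k where "\<forall>x\<in>G. (x \<in> f k) = (x \<in> c)"
    by (auto simp: eventually_sequentially)
  then show ?thesis by blast
qed

theorem mainTheorem13:
  fixes M :: "'a measure" and \<C> :: "'a set set" and d :: nat
  assumes "\<C> \<subseteq> sets M"
    and "universally_separable (space M) \<C>"
  shows "vc_mod_omega1 (space M) \<C> \<le> enat d \<longleftrightarrow>
         (\<exists>N. countable N \<and> N \<subseteq> space M \<and>
              vc_dim (restrict_class \<C> (space M - N)) \<le> enat d)"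
proof
  define \<Omega> where "\<Omega> = space M"
  assume H: "vc_mod_omega1 (space M) \<C> \<le> enat d"
  define n where "n = Suc d"
  obtain C' where C': "countable C'" "C' \<subseteq> \<C>"
    "\<forall>c\<in>\<C>. \<exists>f :: nat \<Rightarrow> 'a set. range f \<subseteq> C' \<and>
           (\<forall>x\<in>\<Omega>. (\<lambda>n. indicator (f n) x :: real) \<longlonglongrightarrow> indicator c x)"
    using assms(2) unfolding universally_separable_def \<Omega>_def by blast
  define \<Sigma> where "\<Sigma> = Pow {1..n} \<rightarrow>\<^sub>E C'"
  have cS: "countable \<Sigma>" unfolding \<Sigma>_def using C'(1) by (simp add: countable_PiE)
  define B where "B \<sigma> i = {x\<in>\<Omega>. \<forall>J\<subseteq>{1..n}. (x \<in> \<sigma> J) = (i \<in> J)}" for \<sigma> :: "nat set \<Rightarrow> 'a set" and i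
  have ex: "\<exists>i\<in>{1..n}. countable (B \<sigma> i)" if "\<sigma> \<in> \<Sigma>" for \<sigma>
  proof (rule ccontr)
    assume "\<not> ?thesis"
    hence unc: "\<forall>i\<in>{1..n}. B \<sigma> i \<subseteq> \<Omega> \<and> uncountable (B \<sigma> i)" by (auto simp: B_def)
    have "\<forall>J \<subseteq> {1..n}. \<exists>c\<in>\<C>. (\<forall>i\<in>J. B \<sigma> i \<subseteq> c) \<and> (\<forall>j\<in>{1..n} - J. c \<inter> B \<sigma> j = {})"
    proof (intro allI impI)
      fix J assume J: "J \<subseteq> {1..n}"
      have "\<sigma> J \<in> \<C>" using that J C'(2) unfolding \<Sigma>_def by auto
      moreover have "\<forall>i\<in>J. B \<sigma> i \<subseteq> \<sigma> J" using J by (auto simp: B_def)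
      moreover have "\<forall>j\<in>{1..n} - J. \<sigma> J \<inter> B \<sigma> j = {}" using J by (auto simp: B_def)
      ultimately show "\<exists>c\<in>\<C>. (\<forall>i\<in>J. B \<sigma> i \<subseteq> c) \<and> (\<forall>j\<in>{1..n} - J. c \<inter> B \<sigma> j = {})" by blast
    qed
    with unc have "enat n \<in> {enat n | n. \<exists>A :: nat \<Rightarrow> 'a set.
      (\<forall>i\<in>{1..n}. A i \<subseteq> \<Omega> \<and> uncountable (A i)) \<and>
      (\<forall>J \<subseteq> {1..n}. \<exists>c\<in>\<C>. (\<forall>i\<in>J. A i \<subseteq> c) \<and> (\<forall>j\<in>{1..n} - J. c \<inter> A j = {}))}"
      by blast
    hence "enat n \<le> vc_mod_omega1 (space M) \<C>"
      unfolding vc_mod_omega1_def \<Omega>_def by (rule Sup_upper)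
    with H have "enat (Suc d) \<le> enat d" unfolding n_def by (rule order_trans[rotated])
    then show False by simp
  qed
  define ch where "ch \<sigma> = (SOME i. i\<in>{1..n} \<and> countable (B \<sigma> i))" for \<sigma>
  have ch: "ch \<sigma> \<in> {1..n} \<and> countable (B \<sigma> (ch \<sigma>))" if "\<sigma> \<in> \<Sigma>" for \<sigma>
    unfolding ch_def using someI_ex[OF ex[OF that, unfolded Bex_def]] .
  define N where "N = (\<Union>\<sigma>\<in>\<Sigma>. B \<sigma> (ch \<sigma>))"
  have cN: "countable N" unfolding N_def using cS ch by (intro countable_UN) auto
  have NO: "N \<subseteq> \<Omega>" unfolding N_def B_def by auto
  have main: False if F: "finite F" "shatters (restrict_class \<C> (\<Omega> - N)) F" "n \<le> card F" for F
  proof -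
    have F\<Omega>: "F \<subseteq> \<Omega> - N"
    proof -
      obtain h where h: "h \<in> restrict_class \<C> (\<Omega> - N)" "h \<inter> F = F"
        using F(2) unfolding shatters_def by blast
      then obtain c where "h = c \<inter> (\<Omega> - N)" unfolding restrict_class_def by blast
      with h(2) show ?thesis by blast
    qed
    obtain G where G: "G \<subseteq> F" "card G = n" "finite G" using obtain_subset_with_card_n[OF F(3)] by blast
    obtain x where x: "bij_betw x {1..n} G" using ex_bij_betw_nat_finite_1[OF G(3)] G(2) by auto
    have GO: "G \<subseteq> \<Omega> - N" using G F\<Omega> by auto
    have real: "\<exists>c'\<in>C'. c' \<inter> G = x ` J" if J: "J \<subseteq> {1..n}" for J
    proof -
      have "x ` J \<subseteq> F" using x J G(1) by (auto simp: bij_betw_def)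
      then obtain h where h: "h \<in> restrict_class \<C> (\<Omega> - N)" "h \<inter> F = x ` J"
        using F(2) unfolding shatters_def by blast
      then obtain c where c: "c \<in> \<C>" "h = c \<inter> (\<Omega> - N)" unfolding restrict_class_def by blast
      have xJG: "x ` J \<subseteq> G" using x J by (auto simp: bij_betw_def)
      have "c \<inter> G = h \<inter> G" using c(2) GO by blast
      also have "\<dots> = (h \<inter> F) \<inter> G" using G(1) by blast
      also have "\<dots> = x ` J" using h(2) xJG by blast
      finally have cG: "c \<inter> G = x ` J" .
      obtain f where f: "range f \<subseteq> C'" "\<forall>x\<in>\<Omega>. (\<lambda>n. indicator (f n) x :: real) \<longlonglongrightarrow> indicator c x"
        using bspec[OF C'(3) c(1)] by (elim exE conjE)
      have GO': "G \<subseteq> \<Omega>" using GO by blast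
      obtain k where k: "f k \<inter> G = c \<inter> G" using approx_finite[OF f(2) G(3) GO'] by (elim exE)
      have fk: "f k \<in> C'" using f(1) by (rule range_subsetD)
      have "f k \<inter> G = x ` J" using k cG by (rule trans)
      with fk show ?thesis by (rule bexI[rotated])
    qed
    define \<sigma> where "\<sigma> J = (if J \<in> Pow {1..n} then (SOME c'. c' \<in> C' \<and> c' \<inter> G = x ` J) else undefined)" for J
    have \<sigma>J: "\<sigma> J \<in> C' \<and> \<sigma> J \<inter> G = x ` J" if "J \<subseteq> {1..n}" for J
    proof -
      have "\<sigma> J = (SOME c'. c' \<in> C' \<and> c' \<inter> G = x ` J)" using that unfolding \<sigma>_def
        by (intro if_P) simp
      then show ?thesis using someI_ex[OF real[OF that, unfolded Bex_def]] by (rule ssubst)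
    qed
    have \<sigma>S: "\<sigma> \<in> \<Sigma>" unfolding \<Sigma>_def PiE_iff
    proof
      show "\<forall>J\<in>Pow {1..n}. \<sigma> J \<in> C'"
      proof
        fix J assume "J \<in> Pow {1..n}"
        then have "J \<subseteq> {1..n}" by simp
        then show "\<sigma> J \<in> C'" by (rule conjunct1[OF \<sigma>J])
      qed
      show "\<sigma> \<in> extensional (Pow {1..n})" unfolding extensional_def
      proof (intro CollectI allI impI)
        fix J assume "J \<notin> Pow {1..n}"
        then show "\<sigma> J = undefined" unfolding \<sigma>_def by (intro if_not_P)
      qed
    qed
    have injx: "inj_on x {1..n}" using x by (simp add: bij_betw_def)
    have xB: "x i \<in> B \<sigma> i" if i: "i \<in> {1..n}" for i
    proof -
      have xi: "x i \<in> G" using bij_betw_apply[OF x i] .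
      have eq: "(x i \<in> \<sigma> J) = (i \<in> J)" if J: "J \<subseteq> {1..n}" for J
      proof -
        have s: "\<sigma> J \<inter> G = x ` J" using \<sigma>J[OF J] by (rule conjunct2)
        have "(x i \<in> \<sigma> J) = (x i \<in> \<sigma> J \<inter> G)" using xi by simp
        also have "\<dots> = (x i \<in> x ` J)" by (simp only: s)
        also have "\<dots> = (i \<in> J)" by (rule inj_on_image_mem_iff[OF injx i J])
        finally show ?thesis .
      qed
      have "x i \<in> \<Omega>" using xi GO by blast
      then show ?thesis unfolding B_def using eq by simp
    qed
    have chs: "ch \<sigma> \<in> {1..n}" using ch[OF \<sigma>S] by (rule conjunct1)
    have "x (ch \<sigma>) \<in> N" unfolding N_def using UN_I[of \<sigma> \<Sigma> _ "\<lambda>s. B s (ch s)", OF \<sigma>S xB[OF chs]] by simp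
    moreover have "x (ch \<sigma>) \<in> G" using bij_betw_apply[OF x chs] .
    ultimately show False using GO by blast
  qed
  have "vc_dim (restrict_class \<C> (\<Omega> - N)) \<le> enat d"
    unfolding vc_dim_def
  proof (rule Sup_least)
    fix y assume "y \<in> {enat (card F) |F. finite F \<and> shatters (restrict_class \<C> (\<Omega> - N)) F}"
    then obtain F where "y = enat (card F)" "finite F" "shatters (restrict_class \<C> (\<Omega> - N)) F" by blast
    then show "y \<le> enat d" using main[of F] unfolding n_def by force
  qed
  then show "\<exists>N. countable N \<and> N \<subseteq> space M \<and> vc_dim (restrict_class \<C> (space M - N)) \<le> enat d"
    using cN NO unfolding \<Omega>_def by blast
next
  define \<Omega> where "\<Omega> = space M"
  assume "\<exists>N. countable N \<and> N \<subseteq> space M \<and> vc_dim (restrict_class \<C> (space M - N)) \<le> enat d"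
  then obtain N where N: "countable N" "vc_dim (restrict_class \<C> (\<Omega> - N)) \<le> enat d"
    unfolding \<Omega>_def by blast
  show "vc_mod_omega1 (space M) \<C> \<le> enat d"
    unfolding vc_mod_omega1_def
  proof (rule Sup_least)
    fix y assume "y \<in> {enat n | n. \<exists>A :: nat \<Rightarrow> 'a set.
      (\<forall>i\<in>{1..n}. A i \<subseteq> space M \<and> uncountable (A i)) \<and>
      (\<forall>J \<subseteq> {1..n}. \<exists>c\<in>\<C>. (\<forall>i\<in>J. A i \<subseteq> c) \<and> (\<forall>j\<in>{1..n} - J. c \<inter> A j = {}))}"
    then obtain n A where y: "y = enat n" and A: "\<forall>i\<in>{1..n}. A i \<subseteq> \<Omega> \<and> uncountable (A i)"
      and Sh: "\<forall>J \<subseteq> {1..n}. \<exists>c\<in>\<C>. (\<forall>i\<in>J. A i \<subseteq> c) \<and> (\<forall>j\<in>{1..n} - J. c \<inter> A j = {})"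
      unfolding \<Omega>_def by (elim CollectE exE conjE) (rule that; simp add: \<Omega>_def)
    have "\<exists>z. z \<in> A i - N" if "i \<in> {1..n}" for i
    proof (rule ccontr)
      assume "\<not> ?thesis" hence "A i \<subseteq> N" by blast
      with N(1) have "countable (A i)" by (rule countable_subset[rotated])
      moreover have "uncountable (A i)" using A that by simp
      ultimately show False by simp
    qed
    then obtain x where x: "\<And>i. i \<in> {1..n} \<Longrightarrow> x i \<in> A i - N" by metis
    have disj: "A i \<inter> A j = {}" if ij: "i \<in> {1..n}" "j \<in> {1..n}" "i \<noteq> j" for i j
    proof -
      have ii: "{i} \<subseteq> {1..n}" using ij by simp
      obtain c where c: "c \<in> \<C>" "\<forall>i'\<in>{i}. A i' \<subseteq> c" "\<forall>j'\<in>{1..n} - {i}. c \<inter> A j' = {}"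
        using Sh[rule_format, OF ii] by blast
      have "A i \<subseteq> c" using c(2) by simp
      moreover have "c \<inter> A j = {}" using c(3) ij by simp
      ultimately show ?thesis by blast
    qed
    have inj: "inj_on x {1..n}"
    proof (rule inj_onI)
      fix i j assume ij: "i \<in> {1..n}" "j \<in> {1..n}" "x i = x j"
      show "i = j"
      proof (rule ccontr)
        assume ne: "i \<noteq> j"
        have "x i \<in> A i" "x j \<in> A j" using x ij(1,2) by auto
        with disj[OF ij(1,2) ne] ij(3) show False by auto
      qed
    qed
    define F where "F = x ` {1..n}"
    have cF: "card F = n" unfolding F_def using card_image[OF inj] by simp
    have sh: "shatters (restrict_class \<C> (\<Omega> - N)) F"
      unfolding shatters_def
    proof (intro allI impI)
      fix Y assume Y: "Y \<subseteq> F"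
      define J where "J = {i\<in>{1..n}. x i \<in> Y}"
      obtain c where c: "c \<in> \<C>" "\<forall>i\<in>J. A i \<subseteq> c" "\<forall>j\<in>{1..n} - J. c \<inter> A j = {}"
      proof -
        have "J \<subseteq> {1..n}" unfolding J_def by blast
        with Sh show ?thesis using that by blast
      qed
      have "(c \<inter> (\<Omega> - N)) \<inter> F = Y"
      proof
        show "c \<inter> (\<Omega> - N) \<inter> F \<subseteq> Y"
        proof
          fix z assume z: "z \<in> c \<inter> (\<Omega> - N) \<inter> F"
          then obtain i where i: "i \<in> {1..n}" "z = x i" unfolding F_def by blast
          show "z \<in> Y"
          proof (rule ccontr)
            assume "z \<notin> Y" hence "i \<in> {1..n} - J" using i unfolding J_def by auto
            then have "c \<inter> A i = {}" using c(3) by blast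
            moreover have "x i \<in> A i" using x[OF i(1)] by blast
            moreover have "x i \<in> c" using z i(2) by blast
            ultimately show False by blast
          qed
        qed
        show "Y \<subseteq> c \<inter> (\<Omega> - N) \<inter> F"
        proof
          fix z assume z: "z \<in> Y"
          then obtain i where i: "i \<in> {1..n}" "z = x i" using Y unfolding F_def by blast
          hence "i \<in> J" using z unfolding J_def by auto
          then have "A i \<subseteq> c" using c(2) by blast
          moreover have xi: "x i \<in> A i - N" using x[OF i(1)] .
          moreover have "A i \<subseteq> \<Omega>" using A i(1) by blast
          moreover have "z \<in> F" using z Y by blast
          ultimately show "z \<in> c \<inter> (\<Omega> - N) \<inter> F" using i(2) by blast
        qed
      qed
      then show "\<exists>h\<in>restrict_class \<C> (\<Omega> - N). h \<inter> F = Y"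
        using c(1) unfolding restrict_class_def by (intro bexI[of _ "c \<inter> (\<Omega> - N)"] imageI)
    qed
    have "enat n \<le> vc_dim (restrict_class \<C> (\<Omega> - N))"
      unfolding vc_dim_def
    proof (rule Sup_upper)
      have "finite F" unfolding F_def by simp
      then show "enat n \<in> {enat (card F) |F. finite F \<and> shatters (restrict_class \<C> (\<Omega> - N)) F}"
        using sh cF by (intro CollectI exI[of _ F]) simp
    qed
    with N(2) have "enat n \<le> enat d" by (rule order_trans[rotated])
    with y show "y \<le> enat d" by simp
  qed
qed

end
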